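(* Let $\epsilon>0$, $\delta\ge0$, $\alpha\in(0,1)$, $n\ge 1$, $\theta_0\in(0,1)$, and let $X\sim\mathrm{Binom}(n,\theta)$ with $\theta$ unknown. Set $b=e^{-\epsilon}$, $q=\frac{2\delta b}{1-b+2\delta b}$, $N\sim\mathrm{Tulap}(0,b,q)$, and set $\phi^*_x=F_N(x-m_1)$ and $\psi^*_x=1-F_N(x-m_2)$, where $m_1,m_2\in\mathbb{R}$ are chosen such that $\mathbb{E}_{\theta_0}\phi^*_X=\alpha$ and $\mathbb{E}_{\theta_0}\psi^*_X=\alpha$. Then $\phi^*$ is the uniformly most powerful level-$\alpha$ test among $\mathscr D^n_{\epsilon,\delta}$ for testing $H_0:\theta\le\theta_0$ versus $H_1:\theta>\theta_0$, and $\psi^*$ is the uniformly most powerful level-$\alpha$ test among $\mathscr D^n_{\epsilon,\delta}$ for testing $H_0:\theta\ge\theta_0$ versus $H_1:\theta<\theta_0$.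
   Context: Nearest integer function: for $t\in\mathbb{R}$, $[t]$ is the integer nearest to $t$, where for $z\in\mathbb{Z}$, $[z+1/2]$ is defined to be the nearest even integer. Tulap distribution: for $m\in\mathbb{R}$, $b\in(0,1)$, $q\in[0,1)$, $N_0\sim\mathrm{Tulap}(m,b,0)$ has cdf $F_{N_0}(x)=\frac{b^{-[x-m]}}{1+b}\big(b+(x-m-[x-m]+\tfrac12)(1-b)\big)$ for $x\leq [m]$ and $F_{N_0}(x)=1-\frac{b^{[x-m]}}{1+b}\big(b+([x-m]-(x-m)+\tfrac12)(1-b)\big)$ for $x>[m]$; and $N\sim \mathrm{Tulap}(m,b,q)$ has cdf $F_N(x)=\frac{F_{N_0}(x)-q/2}{1-q}\,I\{q/2\leq F_{N_0}(x)\leq 1-q/2\}+I\{F_{N_0}(x)>1-q/2\}$. A (randomized) test is a function $\phi:\{0,1,\dots,n\}\to[0,1]$, $\phi_x$ being the probability of rejecting $H_0$ when $X=x$. $\mathscr D^n_{\epsilon,\delta}$ is the set of tests $\phi$ such that for all $x\in\{0,\dots,n-1\}$: $\phi_x\le e^\epsilon\phi_{x+1}+\delta$, $\phi_{x+1}\le e^\epsilon\phi_x+\delta$, $1-\phi_x\le e^\epsilon(1-\phi_{x+1})+\delta$, $1-\phi_{x+1}\le e^\epsilon(1-\phi_x)+\delta$. A test $\phi^*\in\Phi$ is uniformly most powerful at level $\alpha$ among $\Phi$ if $\sup_{\theta\in\Theta_0}\mathbb{E}_\theta\phi^*\le\alpha$ and for every $\phi\in\Phi$ with $\sup_{\theta\in\Theta_0}\mathbb{E}_\theta\phi\le\alpha$,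 $\mathbb{E}_\theta\phi^*\ge\mathbb{E}_\theta\phi$ for all $\theta$ in the alternative. *)

theory Defs
  imports Complex_Main
begin

definition nint :: "real \<Rightarrow> int" where
  "nint t = (if frac t = 1/2
             then (if even \<lfloor>t\<rfloor> then \<lfloor>t\<rfloor> else \<lfloor>t\<rfloor> + 1)
             else \<lfloor>t + 1/2\<rfloor>)"

definition tulap0_cdf :: "real \<Rightarrow> real \<Rightarrow> real \<Rightarrow> real" where
  "tulap0_cdf m b x =
    (if x \<le> of_int (nint m)
     then b powr (- of_int (nint (x - m))) / (1 + b)
            * (b + (x - m - of_int (nint (x - m)) + 1/2) * (1 - b))
     else 1 - b powr (of_int (nint (x - m))) / (1 + b)
            * (b + (of_int (nint (x - m)) - (x - m) + 1/2) * (1 - b)))"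

definition tulap_cdf :: "real \<Rightarrow> real \<Rightarrow> real \<Rightarrow> real \<Rightarrow> real" where
  "tulap_cdf m b q x =
    (let F0 = tulap0_cdf m b x in
      (F0 - q/2) / (1 - q) * (if q/2 \<le> F0 \<and> F0 \<le> 1 - q/2 then 1 else 0)
      + (if F0 > 1 - q/2 then 1 else 0))"

definition binom_exp :: "nat \<Rightarrow> real \<Rightarrow> (nat \<Rightarrow> real) \<Rightarrow> real" where
  "binom_exp n \<theta> \<phi> = (\<Sum>x = 0..n. real (n choose x) * \<theta> ^ x * (1 - \<theta>) ^ (n - x) * \<phi> x)"

definition dp_tests :: "nat \<Rightarrow> real \<Rightarrow> real \<Rightarrow> (nat \<Rightarrow> real) set" where
  "dp_tests n \<epsilon> \<delta> = {\<phi>. (\<forall>x\<le>n. 0 \<le> \<phi> x \<and> \<phi> x \<le> 1) \<and>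
     (\<forall>x<n. \<phi> x \<le> exp \<epsilon> * \<phi> (x+1) + \<delta> \<and>
            \<phi> (x+1) \<le> exp \<epsilon> * \<phi> x + \<delta> \<and>
            1 - \<phi> x \<le> exp \<epsilon> * (1 - \<phi> (x+1)) + \<delta> \<and>
            1 - \<phi> (x+1) \<le> exp \<epsilon> * (1 - \<phi> x) + \<delta>)}"

definition UMP :: "nat \<Rightarrow> (nat \<Rightarrow> real) set \<Rightarrow> real set \<Rightarrow> real set \<Rightarrow> real \<Rightarrow> (nat \<Rightarrow> real) \<Rightarrow> bool" where
  "UMP n \<Phi> \<Theta>0 \<Theta>1 \<alpha> \<phi>s \<longleftrightarrow>
     \<phi>s \<in> \<Phi> \<and> (\<forall>\<theta>\<in>\<Theta>0. binom_exp n \<theta> \<phi>s \<le> \<alpha>) \<and>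
     (\<forall>\<phi>\<in>\<Phi>. (\<forall>\<theta>\<in>\<Theta>0. binom_exp n \<theta> \<phi> \<le> \<alpha>) \<longrightarrow>
        (\<forall>\<theta>\<in>\<Theta>1. binom_exp n \<theta> \<phi>s \<ge> binom_exp n \<theta> \<phi>))"

end

theory Submission
  imports Defs
begin


definition bf :: "nat \<Rightarrow> real \<Rightarrow> nat \<Rightarrow> real" where
  "bf n \<theta> x = real (n choose x) * \<theta> ^ x * (1 - \<theta>) ^ (n - x)"

lemma binom_exp_bf: "binom_exp n \<theta> \<phi> = (\<Sum>x = 0..n. bf n \<theta> x * \<phi> x)"
  by (simp add: binom_exp_def bf_def)

lemma bf_sum: "(\<Sum>x = 0..n. bf n \<theta> x) = 1"
proof -
  have "(\<theta> + (1 - \<theta>)) ^ n = (\<Sum>k\<le>n. of_nat (n choose k) * \<theta> ^ k * (1 - \<theta>) ^ (n - k))"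
    by (rule binomial_ring)
  then show ?thesis by (simp add: bf_def atLeast0AtMost)
qed

lemma bf_nonneg: "0 \<le> \<theta> \<Longrightarrow> \<theta> \<le> 1 \<Longrightarrow> 0 \<le> bf n \<theta> x"
  by (simp add: bf_def)

lemma bf_pos: "0 < \<theta> \<Longrightarrow> \<theta> < 1 \<Longrightarrow> x \<le> n \<Longrightarrow> 0 < bf n \<theta> x"
  by (simp add: bf_def)

lemma mlr:
  assumes "0 \<le> ta" "ta \<le> tb" "tb \<le> 1" "y \<le> x" "x \<le> n"
  shows "bf n tb y * bf n ta x \<le> bf n tb x * bf n ta y"
proof -
  obtain d where d: "x = y + d" using assms(4) le_Suc_ex by blast
  have nd: "n - y = (n - x) + d" using assms d by simp
  define a where "a = tb ^ y * ta ^ y * (1 - tb) ^ (n - x) * (1 - ta) ^ (n - x)"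
  define c where "c = real (n choose x) * real (n choose y)"
  have a0: "0 \<le> a" unfolding a_def using assms by simp
  have c0: "0 \<le> c" unfolding c_def by simp
  have L: "bf n tb y * bf n ta x = c * a * ((1 - tb) ^ d * ta ^ d)"
    unfolding bf_def c_def a_def nd d by (simp add: power_add algebra_simps)
  have R: "bf n tb x * bf n ta y = c * a * (tb ^ d * (1 - ta) ^ d)"
    unfolding bf_def c_def a_def nd d by (simp add: power_add algebra_simps)
  have "(1 - tb) * ta \<le> tb * (1 - ta)" using assms by (simp add: algebra_simps)
  then have "((1 - tb) * ta) ^ d \<le> (tb * (1 - ta)) ^ d"
    by (intro power_mono) (use assms in auto)
  then have "(1 - tb) ^ d * ta ^ d \<le> tb ^ d * (1 - ta) ^ d" by (simp add: power_mult_distrib)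
  then show ?thesis unfolding L R using a0 c0 by (intro mult_left_mono) auto
qed

lemma power_mono_theta:
  assumes mono: "\<And>x y. x \<le> y \<Longrightarrow> y \<le> n \<Longrightarrow> \<phi> x \<le> \<phi> y"
    and "0 \<le> ta" "ta \<le> tb" "tb \<le> 1"
  shows "binom_exp n ta \<phi> \<le> binom_exp n tb \<phi>"
proof -
  let ?A = "bf n ta" and ?B = "bf n tb"
  have "0 \<le> (\<Sum>x=0..n. \<Sum>y=0..n. (\<phi> x - \<phi> y) * (?B x * ?A y - ?B y * ?A x))"
  proof (intro sum_nonneg)
    fix x y assume "x \<in> {0..n}" "y \<in> {0..n}"
    then have xy: "x \<le> n" "y \<le> n" by auto
    show "0 \<le> (\<phi> x - \<phi> y) * (?B x * ?A y - ?B y * ?A x)"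
    proof (cases "y \<le> x")
      case True
      then show ?thesis using mono[OF True xy(1)] mlr[OF assms(2-4) True xy(1)]
        by (intro mult_nonneg_nonneg) auto
    next
      case False
      then have "x \<le> y" by simp
      then show ?thesis using mono[OF \<open>x \<le> y\<close> xy(2)] mlr[OF assms(2-4) \<open>x \<le> y\<close> xy(2)]
        by (intro mult_nonpos_nonpos) auto
    qed
  qed
  also have "(\<Sum>x=0..n. \<Sum>y=0..n. (\<phi> x - \<phi> y) * (?B x * ?A y - ?B y * ?A x))
     = (\<Sum>x=0..n. \<Sum>y=0..n. \<phi> x * ?B x * ?A y) - (\<Sum>x=0..n. \<Sum>y=0..n. \<phi> x * ?A x * ?B y)
       - (\<Sum>x=0..n. \<Sum>y=0..n. \<phi> y * ?A y * ?B x) + (\<Sum>x=0..n. \<Sum>y=0..n. \<phi> y * ?B y * ?A x)"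
    by (simp add: sum_subtractf sum.distrib algebra_simps)
  also have "\<dots> = 2 * (binom_exp n tb \<phi> - binom_exp n ta \<phi>)"
  proof -
    have i1: "\<And>x. (\<Sum>y=0..n. \<phi> x * ?B x * ?A y) = \<phi> x * ?B x"
      by (simp add: sum_distrib_left[symmetric] bf_sum)
    have i2: "\<And>x. (\<Sum>y=0..n. \<phi> x * ?A x * ?B y) = \<phi> x * ?A x"
      by (simp add: sum_distrib_left[symmetric] bf_sum)
    have e1: "(\<Sum>x=0..n. \<Sum>y=0..n. \<phi> x * ?B x * ?A y) = binom_exp n tb \<phi>"
      by (simp only: i1) (simp add: binom_exp_bf mult.commute)
    have e2: "(\<Sum>x=0..n. \<Sum>y=0..n. \<phi> x * ?A x * ?B y) = binom_exp n ta \<phi>"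
      by (simp only: i2) (simp add: binom_exp_bf mult.commute)
    have e3: "(\<Sum>x=0..n. \<Sum>y=0..n. \<phi> y * ?A y * ?B x) = binom_exp n ta \<phi>"
      by (subst sum.swap, simp only: i2) (simp add: binom_exp_bf mult.commute)
    have e4: "(\<Sum>x=0..n. \<Sum>y=0..n. \<phi> y * ?B y * ?A x) = binom_exp n tb \<phi>"
      by (subst sum.swap, simp only: i1) (simp add: binom_exp_bf mult.commute)
    show ?thesis using e1 e2 e3 e4 by simp
  qed
  finally show ?thesis by simp
qed


lemma propagate:
  assumes phi: "\<phi> \<in> dp_tests n \<epsilon> \<delta>" and x: "x < n"
    and le: "\<phi> x \<le> \<phi>s x"
    and tight: "min 1 (min (exp \<epsilon> * \<phi>s x + \<delta>) (1 - exp (-\<epsilon>) * (1 - \<phi>s x - \<delta>))) \<le> \<phi>s (x+1)"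
  shows "\<phi> (x+1) \<le> \<phi>s (x+1)"
proof -
  from phi x have c1: "\<phi> (x+1) \<le> exp \<epsilon> * \<phi> x + \<delta>"
    and c2: "1 - \<phi> x \<le> exp \<epsilon> * (1 - \<phi> (x+1)) + \<delta>"
    and c3: "\<phi> (x+1) \<le> 1"
    unfolding dp_tests_def by auto
  have "(1 - \<phi> x - \<delta>) \<le> exp \<epsilon> * (1 - \<phi> (x+1))" using c2 by simp
  then have "(1 - \<phi> x - \<delta>) / exp \<epsilon> \<le> 1 - \<phi> (x+1)"
    by (simp add: pos_divide_le_eq mult.commute)
  then have c2': "\<phi> (x+1) \<le> 1 - exp (-\<epsilon>) * (1 - \<phi> x - \<delta>)"
    by (simp add: exp_minus inverse_eq_divide)
  have ep: "0 < exp (-\<epsilon>)" by simp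
  have a1: "exp \<epsilon> * \<phi> x + \<delta> \<le> exp \<epsilon> * \<phi>s x + \<delta>" using le by simp
  have a2: "1 - exp (-\<epsilon>) * (1 - \<phi> x - \<delta>) \<le> 1 - exp (-\<epsilon>) * (1 - \<phi>s x - \<delta>)"
    using le ep by (simp add: algebra_simps)
  show ?thesis using c1 c2' c3 a1 a2 tight by linarith
qed

lemma generic_ump:
  assumes t0: "0 < \<theta>0" "\<theta>0 < 1"
    and mono: "\<And>x y. x \<le> y \<Longrightarrow> y \<le> n \<Longrightarrow> \<phi>s x \<le> \<phi>s y"
    and dp: "\<phi>s \<in> dp_tests n \<epsilon> \<delta>"
    and tight: "\<And>x. x < n \<Longrightarrow> \<phi>s x > 0 \<Longrightarrow>
       min 1 (min (exp \<epsilon> * \<phi>s x + \<delta>) (1 - exp (-\<epsilon>) * (1 - \<phi>s x - \<delta>))) \<le> \<phi>s (x+1)"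
    and lev: "binom_exp n \<theta>0 \<phi>s = \<alpha>"
  shows "UMP n (dp_tests n \<epsilon> \<delta>) {0..\<theta>0} {\<theta>0<..1} \<alpha> \<phi>s"
  unfolding UMP_def
proof (intro conjI ballI impI)
  show "\<phi>s \<in> dp_tests n \<epsilon> \<delta>" by fact
next
  fix \<theta> assume "\<theta> \<in> {0..\<theta>0}"
  then show "binom_exp n \<theta> \<phi>s \<le> \<alpha>"
    using power_mono_theta[OF mono, where ta=\<theta> and tb=\<theta>0] t0 lev by auto
next
  fix \<phi> \<theta>1 assume phi: "\<phi> \<in> dp_tests n \<epsilon> \<delta>"
    and plev: "\<forall>\<theta>\<in>{0..\<theta>0}. binom_exp n \<theta> \<phi> \<le> \<alpha>" and t1: "\<theta>1 \<in> {\<theta>0<..1}"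
  define d where "d x = \<phi>s x - \<phi> x" for x
  have "binom_exp n \<theta>0 \<phi> \<le> \<alpha>" using plev t0 by auto
  then have S0: "0 \<le> (\<Sum>x=0..n. bf n \<theta>0 x * d x)"
    using lev by (simp add: binom_exp_bf d_def algebra_simps sum_subtractf)
  have phi01: "\<And>x. x \<le> n \<Longrightarrow> 0 \<le> \<phi> x" using phi unfolding dp_tests_def by auto
  obtain k where kn: "k \<le> n" and below: "\<And>x. x < k \<Longrightarrow> d x \<le> 0"
     and above: "\<And>x. k \<le> x \<Longrightarrow> x \<le> n \<Longrightarrow> 0 \<le> d x"
  proof (cases "\<exists>x\<le>n. d x > 0")
    case True
    define k where "k = (LEAST x. x \<le> n \<and> d x > 0)"
    have k: "k \<le> n \<and> d k > 0" unfolding k_def using True by (metis (mono_tags, lifting) LeastI)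
    have bel: "d x \<le> 0" if "x < k" for x
    proof (rule ccontr)
      assume "\<not> d x \<le> 0"
      then have "x \<le> n \<and> d x > 0" using that k by auto
      then have "k \<le> x" unfolding k_def by (rule Least_le)
      then show False using that by simp
    qed
    have abv: "0 \<le> d x" if "k \<le> x" "x \<le> n" for x
      using that(1,2)
    proof (induction x rule: dec_induct)
      case base then show ?case using k by simp
    next
      case (step m)
      have "\<phi>s k \<le> \<phi>s m" using mono step by auto
      moreover have "\<phi> k \<ge> 0" using phi01 k by auto
      ultimately have pos: "\<phi>s m > 0" using k unfolding d_def by auto
      have "\<phi> (m+1) \<le> \<phi>s (m+1)"
        using propagate[OF phi _ _ tight[OF _ pos]] step by (auto simp: d_def)
      then show ?case by (simp add: d_def)
    qed
    show ?thesis using that[of k] k bel abv by auto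
  next
    case False
    have bel: "d x \<le> 0" if "x < n" for x using False that by (meson less_imp_le not_le)
    have "(\<Sum>x=0..n. bf n \<theta>0 x * d x) = (\<Sum>x=0..<n. bf n \<theta>0 x * d x) + bf n \<theta>0 n * d n"
      by (simp add: sum.atLeast0_atMost_Suc atLeast0AtMost lessThan_atLeast0[symmetric] sum.lessThan_Suc[symmetric]
            atLeastLessThanSuc_atLeastAtMost[symmetric])
    moreover have "(\<Sum>x=0..<n. bf n \<theta>0 x * d x) \<le> 0"
      using bel bf_pos[OF t0] by (intro sum_nonpos) (simp add: mult_nonneg_nonpos less_imp_le)
    ultimately have "0 \<le> bf n \<theta>0 n * d n" using S0 by linarith
    then have "0 \<le> d n" using bf_pos[OF t0, of n n] by (simp add: zero_le_mult_iff)
    then show ?thesis using that[of n] bel by (metis le_antisym le_refl not_le)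
  qed
  have t1': "\<theta>0 \<le> \<theta>1" "\<theta>1 \<le> 1" using t1 by auto
  have termw: "bf n \<theta>1 k * (bf n \<theta>0 x * d x) \<le> bf n \<theta>0 k * (bf n \<theta>1 x * d x)" if x: "x \<in> {0..n}" for x
  proof (cases "k \<le> x")
    case True
    have "bf n \<theta>1 k * bf n \<theta>0 x \<le> bf n \<theta>1 x * bf n \<theta>0 k"
      using mlr[of \<theta>0 \<theta>1 k x n] t0 t1' True x by auto
    then have "(bf n \<theta>1 k * bf n \<theta>0 x) * d x \<le> (bf n \<theta>1 x * bf n \<theta>0 k) * d x"
      using above[OF True] x by (intro mult_right_mono) auto
    then show ?thesis by (simp add: ac_simps)
  next
    case False
    have "bf n \<theta>1 x * bf n \<theta>0 k \<le> bf n \<theta>1 k * bf n \<theta>0 x"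
      using mlr[of \<theta>0 \<theta>1 x k n] t0 t1' False kn by auto
    then have "(bf n \<theta>1 k * bf n \<theta>0 x) * d x \<le> (bf n \<theta>1 x * bf n \<theta>0 k) * d x"
      using below[of x] False by (intro mult_right_mono_neg) auto
    then show ?thesis by (simp add: ac_simps)
  qed
  have "0 \<le> bf n \<theta>1 k * (\<Sum>x=0..n. bf n \<theta>0 x * d x)"
    using S0 bf_nonneg[of \<theta>1 n k] t1' t0 by simp
  also have "\<dots> \<le> bf n \<theta>0 k * (\<Sum>x=0..n. bf n \<theta>1 x * d x)"
    unfolding sum_distrib_left by (rule sum_mono) (rule termw)
  finally have "0 \<le> (\<Sum>x=0..n. bf n \<theta>1 x * d x)"
    using bf_pos[OF t0 kn] by (simp add: zero_le_mult_iff)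
  then show "binom_exp n \<theta>1 \<phi> \<le> binom_exp n \<theta>1 \<phi>s"
    by (simp add: binom_exp_bf d_def algebra_simps sum_subtractf)
qed



lemma nint_bound: "\<bar>t - of_int (nint t)\<bar> \<le> 1/2"
proof (cases "frac t = 1/2")
  case True
  then have t: "t = of_int \<lfloor>t\<rfloor> + 1/2" by (simp add: frac_def)
  show ?thesis unfolding nint_def using True by (subst (1 2) t) auto
next
  case False
  have "of_int \<lfloor>t + 1/2\<rfloor> \<le> t + 1/2" "t + 1/2 < of_int \<lfloor>t + 1/2\<rfloor> + 1"
    by linarith+
  then have "\<bar>t - of_int \<lfloor>t + 1/2\<rfloor>\<bar> \<le> 1/2" unfolding abs_le_iff by linarith
  then show ?thesis unfolding nint_def using False by simp
qed

lemma nint_0: "nint 0 = 0" by (simp add: nint_def)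

definition P :: "real \<Rightarrow> int \<Rightarrow> real \<Rightarrow> real" where
  "P b k s = (if k \<le> 0 then b powr (- of_int k) / (1 + b) * (b + (s - of_int k + 1/2) * (1 - b))
             else 1 - b powr (of_int k) / (1 + b) * (b + (of_int k - s + 1/2) * (1 - b)))"

lemma G_nint: assumes "0 < b" shows "tulap0_cdf 0 b t = P b (nint t) t"
proof -
  have nb: "\<bar>t - of_int (nint t)\<bar> \<le> 1/2" by (rule nint_bound)
  show ?thesis
  proof (cases "t \<le> 0")
    case True
    then have "nint t \<le> 0" using nb by linarith
    then show ?thesis using True by (simp add: tulap0_cdf_def nint_0 P_def)
  next
    case False
    then have "nint t \<ge> 0" using nb by linarith
    moreover have "nint t = 0 \<Longrightarrow> ?thesis" using False assms
      by (simp add: tulap0_cdf_def nint_0 P_def field_simps)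
    ultimately show ?thesis using False
      by (cases "nint t = 0") (auto simp add: tulap0_cdf_def nint_0 P_def)
  qed
qed

lemma P_bdry: assumes "0 < b" shows "P b k (of_int k + 1/2) = P b (k+1) (of_int k + 1/2)"
proof -
  consider "k \<le> -1" | "k = 0" | "k \<ge> 1" by linarith
  then show ?thesis
  proof cases
    case 1
    have "b powr (- of_int (k+1) + 1) = b powr (- of_int (k+1)) * b powr 1"
      by (rule powr_add)
    then have "b powr (- of_int k) = b powr (- of_int (k+1)) * b"
      using assms by simp
    then show ?thesis using 1 assms by (simp add: P_def field_simps)
  next
    case 2
    then show ?thesis using assms by (simp add: P_def field_simps)
  next
    case 3
    have "b powr (of_int (k+1)) = b powr (of_int k) * b"
      using assms by (simp add: powr_add)
    then show ?thesis using 3 assms by (simp add: P_def field_simps)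
  qed
qed

lemma G_P: assumes "0 < b" and "\<bar>s - of_int j\<bar> \<le> 1/2" shows "tulap0_cdf 0 b s = P b j s"
proof -
  define k where "k = nint s"
  have nb: "\<bar>s - of_int k\<bar> \<le> 1/2" unfolding k_def by (rule nint_bound)
  have "\<bar>of_int j - of_int k\<bar> \<le> (1::real)" using nb assms(2) by linarith
  then have "\<bar>j - k\<bar> \<le> 1" by linarith
  then consider "j = k" | "j = k + 1" | "k = j + 1" by linarith
  then show ?thesis
  proof cases
    case 1 then show ?thesis using G_nint[OF assms(1)] k_def by simp
  next
    case 2
    then have "s = of_int k + 1/2" using nb assms(2) by simp
    then show ?thesis using G_nint[OF assms(1)] k_def 2 P_bdry[OF assms(1), of k] by simp
  next
    case 3
    then have "s = of_int j + 1/2" using nb assms(2) by simp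
    then show ?thesis using G_nint[OF assms(1)] k_def 3 P_bdry[OF assms(1), of j] by simp
  qed
qed

lemma P_mono: assumes "0 < b" "b < 1" "s \<le> t" shows "P b k s \<le> P b k t"
proof -
  have "(s - of_int k + 1/2) * (1 - b) \<le> (t - of_int k + 1/2) * (1 - b)"
    "(of_int k - t + 1/2) * (1 - b) \<le> (of_int k - s + 1/2) * (1 - b)"
    using assms by (auto intro!: mult_right_mono)
  then have "b powr (- of_int k) * (b + (s - of_int k + 1/2) * (1 - b)) / (1 + b)
      \<le> b powr (- of_int k) * (b + (t - of_int k + 1/2) * (1 - b)) / (1 + b)"
    "b powr (of_int k) * (b + (of_int k - t + 1/2) * (1 - b)) / (1 + b)
      \<le> b powr (of_int k) * (b + (of_int k - s + 1/2) * (1 - b)) / (1 + b)"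
    using assms by (auto intro!: divide_right_mono mult_left_mono)
  then show ?thesis unfolding P_def by auto
qed


lemma G_step:
  assumes b: "0 < b" "b < 1"
  shows "(\<lfloor>t + 1/2\<rfloor> \<le> -1 \<longrightarrow> tulap0_cdf 0 b (t+1) = tulap0_cdf 0 b t / b \<and> tulap0_cdf 0 b t \<le> b / (1 + b))
       \<and> (\<lfloor>t + 1/2\<rfloor> \<ge> 0 \<longrightarrow> 1 - tulap0_cdf 0 b (t+1) = b * (1 - tulap0_cdf 0 b t) \<and> tulap0_cdf 0 b t \<ge> b / (1 + b))"
proof -
  define j where "j = \<lfloor>t + 1/2\<rfloor>"
  have jb: "\<bar>t - of_int j\<bar> \<le> 1/2" unfolding j_def abs_le_iff by linarith
  have jr: "of_int j \<le> t + 1/2" "t + 1/2 < of_int j + 1" unfolding j_def by linarith+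
  have jb1: "\<bar>(t+1) - of_int (j+1)\<bar> \<le> 1/2" using jb by simp
  have G0: "tulap0_cdf 0 b t = P b j t" by (rule G_P[OF b(1) jb])
  have G1: "tulap0_cdf 0 b (t+1) = P b (j+1) (t+1)" by (rule G_P[OF b(1) jb1])
  have m: "0 \<le> (t - of_int j + 1/2) * (1 - b)" "(t - of_int j + 1/2) * (1 - b) \<le> 1 * (1 - b)"
      "0 \<le> (of_int j - t + 1/2) * (1 - b)" "(of_int j - t + 1/2) * (1 - b) \<le> 1 * (1 - b)"
      using jr b by (auto intro!: mult_right_mono)
  have aux1: "\<And>X. X \<le> 1 * (1 - b) \<Longrightarrow> b + X \<le> 1" by simp
  have aux2: "\<And>X. 0 \<le> X \<Longrightarrow> 0 \<le> b + X" using b by simp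
  note c01 = aux2[OF m(1)] and c02 = aux1[OF m(2)] and c03 = aux2[OF m(3)] and c04 = aux1[OF m(4)]
  note c0 = c01 c02 c03 c04
  have A: "tulap0_cdf 0 b (t+1) = tulap0_cdf 0 b t / b \<and> tulap0_cdf 0 b t \<le> b / (1 + b)" if j1: "j \<le> -1"
  proof -
    have "b powr (- of_int (j+1) + 1) = b powr (- of_int (j+1)) * b powr 1"
      by (rule powr_add)
    then have w: "b powr (- of_int j) = b powr (- of_int (j+1)) * b" using b by simp
    have wb: "b powr (- of_int j) \<le> b powr 1" using j1 b by (intro powr_mono') auto
    have "b powr (- of_int j) * (b + (t - of_int j + 1/2) * (1 - b)) \<le> b * 1"
      using wb c0 b by (intro mult_mono) auto
    then have "P b j t \<le> b / (1 + b)" using j1 b by (simp add: P_def divide_right_mono)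
    moreover have "P b (j+1) (t+1) = P b j t / b"
    proof -
      define W where "W = b powr (- of_int (j+1))"
      define c where "c = b + (t - of_int j + 1/2) * (1 - b)"
      have e1: "P b (j+1) (t+1) = W / (1+b) * c" using j1 by (simp add: P_def W_def c_def)
      have e2: "P b j t = (W * b) / (1+b) * c" using j1 w by (simp add: P_def W_def c_def)
      show ?thesis unfolding e1 e2 using b by simp
    qed
    ultimately show ?thesis using G0 G1 by simp
  qed
  have B: "1 - tulap0_cdf 0 b (t+1) = b * (1 - tulap0_cdf 0 b t) \<and> tulap0_cdf 0 b t \<ge> b / (1 + b)" if j0: "j \<ge> 0"
  proof (cases "j = 0")
    case True
    have "1 - P b (j+1) (t+1) = b * (1 - P b j t)" using True b by (simp add: P_def field_simps)
    moreover have "b / (1 + b) \<le> P b j t" using True b c0 jr by (simp add: P_def divide_right_mono)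
    ultimately show ?thesis using G0 G1 by simp
  next
    case False
    then have j1: "j \<ge> 1" using j0 by simp
    have w: "b powr (of_int (j+1)) = b powr (of_int j) * b" using b by (simp add: powr_add)
    have wb: "b powr (of_int j) \<le> b powr 1" using j1 b by (intro powr_mono') auto
    have "b powr (of_int j) * (b + (of_int j - t + 1/2) * (1 - b)) \<le> 1 * 1"
      using wb c0 b by (intro mult_mono) auto
    then have "b powr (of_int j) * (b + (of_int j - t + 1/2) * (1 - b)) / (1 + b) \<le> 1 / (1 + b)"
      using b by (simp add: divide_right_mono)
    then have "b / (1 + b) \<le> P b j t" using j1 b by (simp add: P_def field_simps)
    moreover have "1 - P b (j+1) (t+1) = b * (1 - P b j t)" using j1 b w by (simp add: P_def field_simps)
    ultimately show ?thesis using G0 G1 by simp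
  qed
  show ?thesis using A B unfolding j_def by auto
qed


lemma P_bounds:
  assumes b: "0 < b" "b < 1" and sj: "\<bar>s - of_int k\<bar> \<le> 1/2"
  shows "0 \<le> P b k s \<and> P b k s \<le> 1"
proof -
  have m: "0 \<le> (s - of_int k + 1/2) * (1 - b)" "(s - of_int k + 1/2) * (1 - b) \<le> 1 * (1 - b)"
      "0 \<le> (of_int k - s + 1/2) * (1 - b)" "(of_int k - s + 1/2) * (1 - b) \<le> 1 * (1 - b)"
      using sj b unfolding abs_le_iff by (auto intro!: mult_right_mono)
  have aux1: "\<And>X. X \<le> 1 * (1 - b) \<Longrightarrow> b + X \<le> 1" by simp
  have aux2: "\<And>X. 0 \<le> X \<Longrightarrow> 0 \<le> b + X" using b by simp
  note c01 = aux2[OF m(1)] and c02 = aux1[OF m(2)] and c03 = aux2[OF m(3)] and c04 = aux1[OF m(4)]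
  show ?thesis
  proof (cases "k \<le> 0")
    case True
    have wb: "b powr (- of_int k) \<le> b powr 0" using True b by (intro powr_mono') auto
    have "b powr (- of_int k) * (b + (s - of_int k + 1/2) * (1 - b)) \<le> 1 * 1"
      using wb c01 c02 b by (intro mult_mono) auto
    then have "b powr (- of_int k) * (b + (s - of_int k + 1/2) * (1 - b)) / (1 + b) \<le> 1"
      using b by simp
    moreover have "0 \<le> b powr (- of_int k) * (b + (s - of_int k + 1/2) * (1 - b)) / (1 + b)"
      using c01 b by simp
    ultimately show ?thesis using True by (simp add: P_def)
  next
    case False
    have wb: "b powr (of_int k) \<le> b powr 0" using False b by (intro powr_mono') auto
    have "b powr (of_int k) * (b + (of_int k - s + 1/2) * (1 - b)) \<le> 1 * 1"
      using wb c03 c04 b by (intro mult_mono) auto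
    then have "b powr (of_int k) * (b + (of_int k - s + 1/2) * (1 - b)) / (1 + b) \<le> 1"
      using b by simp
    moreover have "0 \<le> b powr (of_int k) * (b + (of_int k - s + 1/2) * (1 - b)) / (1 + b)"
      using c03 b by simp
    ultimately show ?thesis using False by (simp add: P_def)
  qed
qed

lemma G_bounds:
  assumes b: "0 < b" "b < 1"
  shows "0 \<le> tulap0_cdf 0 b t \<and> tulap0_cdf 0 b t \<le> 1"
  using P_bounds[OF b nint_bound[of t]] G_nint[OF b(1)] by simp

lemma G_min:
  assumes b: "0 < b" "b < 1"
  shows "tulap0_cdf 0 b (t+1) = min (tulap0_cdf 0 b t / b) (1 - b * (1 - tulap0_cdf 0 b t))"
proof -
  define g where "g = tulap0_cdf 0 b t"
  have st: "(\<lfloor>t + 1/2\<rfloor> \<le> -1 \<longrightarrow> tulap0_cdf 0 b (t+1) = g / b \<and> g \<le> b / (1 + b))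
       \<and> (\<lfloor>t + 1/2\<rfloor> \<ge> 0 \<longrightarrow> 1 - tulap0_cdf 0 b (t+1) = b * (1 - g) \<and> g \<ge> b / (1 + b))"
    using G_step[OF b, of t] unfolding g_def .
  have key: "g / b \<le> 1 - b * (1 - g) \<longleftrightarrow> g \<le> b / (1 + b)"
  proof -
    have "g / b \<le> 1 - b * (1 - g) \<longleftrightarrow> g \<le> b * (1 - b * (1 - g))"
      using b by (simp add: divide_le_eq mult.commute)
    also have "\<dots> \<longleftrightarrow> g * ((1 - b) * (1 + b)) \<le> b * (1 - b)"
      by (simp add: algebra_simps)
    also have "\<dots> \<longleftrightarrow> g * (1 + b) \<le> b"
    proof -
      have "g * ((1 - b) * (1 + b)) = (1 - b) * (g * (1 + b))" by (simp add: algebra_simps)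
      moreover have "b * (1 - b) = (1 - b) * b" by simp
      ultimately show ?thesis using b by simp
    qed
    also have "\<dots> \<longleftrightarrow> g \<le> b / (1 + b)" using b by (simp add: le_divide_eq)
    finally show ?thesis .
  qed
  show ?thesis
  proof (cases "\<lfloor>t + 1/2\<rfloor> \<le> -1")
    case True
    then show ?thesis using st key unfolding g_def by (simp add: min_def)
  next
    case False
    then have "\<lfloor>t + 1/2\<rfloor> \<ge> 0" by linarith
    then have "tulap0_cdf 0 b (t+1) = 1 - b * (1 - g)" "g \<ge> b / (1 + b)" using st by (auto simp del: zero_le_floor)
    moreover have "b / (1 + b) \<le> g \<Longrightarrow> 1 - b * (1 - g) \<le> g / b"
    proof (cases "g = b / (1 + b)")
      case True
      have "b + b * b \<noteq> 0" using b by (smt (verit) mult_pos_pos)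
      then have "1 - b * (1 - b / (1 + b)) = b / (1 + b) / b" using b by (simp add: field_simps)
      then show ?thesis unfolding True by simp
    next
      case False
      then show "b / (1 + b) \<le> g \<Longrightarrow> 1 - b * (1 - g) \<le> g / b" using key by auto
    qed
    ultimately show ?thesis unfolding g_def by (simp add: min_def)
  qed
qed

lemma G_step_mono:
  assumes b: "0 < b" "b < 1"
  shows "tulap0_cdf 0 b t \<le> tulap0_cdf 0 b (t+1)"
proof -
  define g where "g = tulap0_cdf 0 b t"
  have g: "0 \<le> g" "g \<le> 1" using G_bounds[OF b, of t] unfolding g_def by auto
  have "g \<le> g / b" using g b by (simp add: le_divide_eq mult_left_le)
  moreover have "g \<le> 1 - b * (1 - g)"
  proof -
    have "b * (1 - g) \<le> 1 * (1 - g)" using g b by (intro mult_right_mono) auto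
    then show ?thesis by simp
  qed
  ultimately show ?thesis using G_min[OF b, of t] unfolding g_def by simp
qed

lemma G_iter_mono:
  assumes b: "0 < b" "b < 1"
  shows "tulap0_cdf 0 b u \<le> tulap0_cdf 0 b (u + real m)"
proof (induction m)
  case 0 then show ?case by simp
next
  case (Suc m)
  have "tulap0_cdf 0 b (u + real m) \<le> tulap0_cdf 0 b (u + real m + 1)" by (rule G_step_mono[OF b])
  moreover have "u + real (Suc m) = u + real m + 1" by simp
  ultimately show ?case using Suc by (metis order_trans)
qed

lemma G_mono:
  assumes b: "0 < b" "b < 1" and st: "s \<le> t"
  shows "tulap0_cdf 0 b s \<le> tulap0_cdf 0 b t"
proof -
  define js where "js = \<lfloor>s + 1/2\<rfloor>"
  define jt where "jt = \<lfloor>t + 1/2\<rfloor>"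
  have jsb: "\<bar>s - of_int js\<bar> \<le> 1/2" unfolding js_def abs_le_iff by linarith
  have jtb: "\<bar>t - of_int jt\<bar> \<le> 1/2" unfolding jt_def abs_le_iff by linarith
  have jsr: "of_int js \<le> s + 1/2" "s + 1/2 < of_int js + 1" unfolding js_def by linarith+
  have jtr: "of_int jt \<le> t + 1/2" "t + 1/2 < of_int jt + 1" unfolding jt_def by linarith+
  have "js \<le> jt" unfolding js_def jt_def using st by (intro floor_mono) simp
  show ?thesis
  proof (cases "js = jt")
    case True
    then show ?thesis using G_P[OF b(1) jsb] G_P[OF b(1) jtb] P_mono[OF b st] by simp
  next
    case False
    then have lt: "js + 1 \<le> jt" using \<open>js \<le> jt\<close> by simp
    have "tulap0_cdf 0 b s = P b js s" by (rule G_P[OF b(1) jsb])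
    also have "\<dots> \<le> P b js (of_int js + 1/2)" using jsr by (intro P_mono[OF b]) simp
    also have "\<dots> = tulap0_cdf 0 b (of_int js + 1/2)" by (rule G_P[OF b(1), symmetric]) simp
    also have "\<dots> \<le> tulap0_cdf 0 b (of_int js + 1/2 + real (nat (jt - js - 1)))"
      by (rule G_iter_mono[OF b])
    also have "of_int js + 1/2 + real (nat (jt - js - 1)) = of_int jt - 1/2" using lt by simp
    also have "tulap0_cdf 0 b (of_int jt - 1/2) = P b jt (of_int jt - 1/2)"
      by (rule G_P[OF b(1)]) simp
    also have "\<dots> \<le> P b jt t" using jtr by (intro P_mono[OF b]) simp
    also have "\<dots> = tulap0_cdf 0 b t" by (rule G_P[OF b(1) jtb, symmetric])
    finally show ?thesis .
  qed
qed



lemma clip1: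
  fixes x y b d :: real
  assumes b: "0 < b" "b < 1" and d: "0 \<le> d"
    and y: "y = min (x / b + d) (1 - b * (1 - x - d))"
  shows "max 0 (min 1 y) \<le> max 0 (min 1 x) / b + d"
proof -
  have "y \<le> x / b + d" using y by simp
  have "0 \<le> max 0 (min 1 x) / b" using b by simp
  have "x / b \<le> max 0 (min 1 x) / b \<or> 1 \<le> max 0 (min 1 x) / b"
  proof (cases "x \<le> 1")
    case True then show ?thesis using b by (auto intro!: divide_right_mono)
  next
    case False then show ?thesis using b by (simp add: le_divide_eq)
  qed
  then show ?thesis using \<open>y \<le> x / b + d\<close> \<open>0 \<le> max 0 (min 1 x) / b\<close> d by auto
qed

lemma clip2:
  fixes x y b d :: real
  assumes b: "0 < b" "b < 1" and d: "0 \<le> d"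
    and y: "y = min (x / b + d) (1 - b * (1 - x - d))"
  shows "1 - max 0 (min 1 x) \<le> (1 - max 0 (min 1 y)) / b + d"
proof -
  have "y \<le> 1 - b * (1 - x - d)" using y by simp
  then have "b * (1 - x) \<le> (1 - y) + b * d" by (simp add: algebra_simps)
  then have "1 - x \<le> (1 - y) / b + d" using b by (simp add: field_simps mult.commute)
  have "0 \<le> (1 - max 0 (min 1 y)) / b" using b by simp
  have "(1 - y) / b \<le> (1 - max 0 (min 1 y)) / b \<or> 1 \<le> (1 - max 0 (min 1 y)) / b"
  proof (cases "0 \<le> y")
    case True then show ?thesis using b by (auto intro!: divide_right_mono)
  next
    case False then show ?thesis using b by (simp add: le_divide_eq)
  qed
  then show ?thesis using \<open>1 - x \<le> (1 - y) / b + d\<close> \<open>0 \<le> (1 - max 0 (min 1 y)) / b\<close> d by auto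
qed

lemma clip3:
  fixes x y b d :: real
  assumes b: "0 < b" "b < 1" and d: "0 \<le> d"
    and y: "y = min (x / b + d) (1 - b * (1 - x - d))"
    and X: "max 0 (min 1 x) > 0"
  shows "min 1 (min (max 0 (min 1 x) / b + d) (1 - b * (1 - max 0 (min 1 x) - d))) \<le> max 0 (min 1 y)"
proof (cases "x \<ge> 1")
  case True
  have "1 \<le> x / b" using True b by (simp add: le_divide_eq)
  moreover have "b * (1 - x - d) \<le> 0" using True b d by (simp add: mult_nonneg_nonpos)
  ultimately have "y \<ge> 1" using y d by simp
  then show ?thesis by simp
next
  case False
  then have "max 0 (min 1 x) = x" using X by auto
  then show ?thesis using y by auto
qed

lemma clip4:
  fixes x y b d :: real
  assumes b: "0 < b" "b < 1" and d: "0 \<le> d"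
    and y: "y = min (x / b + d) (1 - b * (1 - x - d))"
    and Y: "max 0 (min 1 y) < 1"
  shows "min 1 (min ((1 - max 0 (min 1 y)) / b + d) (1 - b * (max 0 (min 1 y) - d))) \<le> 1 - max 0 (min 1 x)"
proof (cases "x \<le> 0")
  case True then show ?thesis by simp
next
  case False
  have "x \<le> x / b" using False b by (simp add: le_divide_eq mult_left_le)
  then have y1: "x \<le> x / b + d" using d by simp
  have y2: "y < 1" using Y by auto
  show ?thesis
  proof (cases "x / b + d \<le> 1 - b * (1 - x - d)")
    case True
    then have "y = x / b + d" using y by simp
    then have yy: "max 0 (min 1 y) = x / b + d" using y1 y2 False by auto
    have "1 - b * (x / b + d - d) = 1 - x" using b by simp
    then show ?thesis unfolding yy using y2 \<open>y = x / b + d\<close> by simp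
  next
    case False2: False
    then have "y = 1 - b * (1 - x - d)" using y by simp
    have "x \<le> 1 - b * (1 - x - d)"
    proof -
      have "0 < b * (1 - x - d)" using y2 \<open>y = 1 - b * (1 - x - d)\<close> by linarith
      then have "x < 1" using b d by (simp add: zero_less_mult_iff)
      have "b * (1 - x - d) \<le> 1 * (1 - x)"
      proof -
        have "b * (1 - x - d) \<le> b * (1 - x)" using b d by (simp add: mult_left_mono)
        also have "\<dots> \<le> 1 * (1 - x)" using b \<open>x < 1\<close> by (intro mult_right_mono) auto
        finally show ?thesis .
      qed
      then show ?thesis by simp
    qed
    then have yy: "max 0 (min 1 y) = 1 - b * (1 - x - d)" using \<open>y = 1 - b * (1 - x - d)\<close> y2 False by auto
    have "(1 - (1 - b * (1 - x - d))) / b + d = 1 - x" using b by (simp add: field_simps)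
    then have "min 1 (min ((1 - max 0 (min 1 y)) / b + d) (1 - b * (max 0 (min 1 y) - d))) \<le> 1 - x"
      unfolding yy by simp
    moreover have "max 0 (min 1 x) = x" using False \<open>x \<le> 1 - b * (1 - x - d)\<close> y2 \<open>y = 1 - b * (1 - x - d)\<close> by auto
    ultimately show ?thesis by simp
  qed
qed



lemma refl_exp: "binom_exp n \<theta> (\<lambda>y. \<phi> (n - y)) = binom_exp n (1 - \<theta>) \<phi>"
proof -
  have "binom_exp n \<theta> (\<lambda>y. \<phi> (n - y))
      = (\<Sum>y = 0..n. real (n choose y) * \<theta> ^ y * (1 - \<theta>) ^ (n - y) * \<phi> (n - y))"
    by (simp add: binom_exp_def)
  also have "\<dots> = (\<Sum>x = 0..n. real (n choose (n - x)) * \<theta> ^ (n - x) * (1 - \<theta>) ^ (n - (n - x)) * \<phi> (n - (n - x)))"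
    by (subst sum.atLeastAtMost_rev) simp
  also have "\<dots> = (\<Sum>x = 0..n. real (n choose x) * (1 - \<theta>) ^ x * (1 - (1 - \<theta>)) ^ (n - x) * \<phi> x)"
    by (intro sum.cong refl) (auto simp: binomial_symmetric[symmetric])
  also have "\<dots> = binom_exp n (1 - \<theta>) \<phi>" by (simp add: binom_exp_def)
  finally show ?thesis .
qed

lemma dp_cong: "\<phi> \<in> dp_tests n \<epsilon> \<delta> \<Longrightarrow> (\<And>x. x \<le> n \<Longrightarrow> \<phi>' x = \<phi> x) \<Longrightarrow> \<phi>' \<in> dp_tests n \<epsilon> \<delta>"
  unfolding dp_tests_def by auto

lemma dp_refl: assumes "\<phi> \<in> dp_tests n \<epsilon> \<delta>" shows "(\<lambda>y. \<phi> (n - y)) \<in> dp_tests n \<epsilon> \<delta>"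
proof -
  have A: "\<forall>x\<le>n. 0 \<le> \<phi> x \<and> \<phi> x \<le> 1" and
    B: "\<forall>x<n. \<phi> x \<le> exp \<epsilon> * \<phi> (x+1) + \<delta> \<and>
            \<phi> (x+1) \<le> exp \<epsilon> * \<phi> x + \<delta> \<and>
            1 - \<phi> x \<le> exp \<epsilon> * (1 - \<phi> (x+1)) + \<delta> \<and>
            1 - \<phi> (x+1) \<le> exp \<epsilon> * (1 - \<phi> x) + \<delta>"
    using assms unfolding dp_tests_def by auto
  show ?thesis unfolding dp_tests_def
  proof (intro CollectI conjI allI impI)
    fix x assume "x \<le> n" then show "0 \<le> \<phi> (n - x)" "\<phi> (n - x) \<le> 1" using A by auto
  next
    fix x assume x: "x < n"
    define z where "z = n - (x + 1)"
    have z: "z < n" "n - x = z + 1" "n - (x+1) = z" using x unfolding z_def by auto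
    show "\<phi> (n - x) \<le> exp \<epsilon> * \<phi> (n - (x+1)) + \<delta>"
       "\<phi> (n - (x+1)) \<le> exp \<epsilon> * \<phi> (n - x) + \<delta>"
       "1 - \<phi> (n - x) \<le> exp \<epsilon> * (1 - \<phi> (n - (x+1))) + \<delta>"
       "1 - \<phi> (n - (x+1)) \<le> exp \<epsilon> * (1 - \<phi> (n - x)) + \<delta>"
      unfolding z(2,3) using B z(1) by auto
  qed
qed

lemma UMP_refl:
  assumes "UMP n (dp_tests n \<epsilon> \<delta>) {0..1-\<theta>0} {1-\<theta>0<..1} \<alpha> (\<lambda>y. \<psi> (n - y))"
  shows "UMP n (dp_tests n \<epsilon> \<delta>) {\<theta>0..1} {0..<\<theta>0} \<alpha> \<psi>"
proof -
  let ?r = "\<lambda>f. (\<lambda>y. f (n - y))"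
  have rr: "binom_exp n t (?r f) = binom_exp n (1 - t) f" for t f by (rule refl_exp)
  have mem: "?r \<psi> \<in> dp_tests n \<epsilon> \<delta>"
    and lev: "\<forall>\<theta>\<in>{0..1-\<theta>0}. binom_exp n \<theta> (?r \<psi>) \<le> \<alpha>"
    and best: "\<forall>\<phi>\<in>dp_tests n \<epsilon> \<delta>. (\<forall>\<theta>\<in>{0..1-\<theta>0}. binom_exp n \<theta> \<phi> \<le> \<alpha>) \<longrightarrow>
        (\<forall>\<theta>\<in>{1-\<theta>0<..1}. binom_exp n \<theta> (?r \<psi>) \<ge> binom_exp n \<theta> \<phi>)"
    using assms unfolding UMP_def by auto
  show ?thesis unfolding UMP_def
  proof (intro conjI ballI impI)
    have "?r (?r \<psi>) \<in> dp_tests n \<epsilon> \<delta>" by (rule dp_refl[OF mem])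
    then show "\<psi> \<in> dp_tests n \<epsilon> \<delta>" by (rule dp_cong) auto
  next
    fix \<theta> assume "\<theta> \<in> {\<theta>0..1}"
    then have "1 - \<theta> \<in> {0..1-\<theta>0}" by auto
    then have "binom_exp n (1 - \<theta>) (?r \<psi>) \<le> \<alpha>" using lev by blast
    then show "binom_exp n \<theta> \<psi> \<le> \<alpha>" using rr[of "1 - \<theta>" \<psi>] by simp
  next
    fix \<phi> \<theta> assume phi: "\<phi> \<in> dp_tests n \<epsilon> \<delta>" and plev: "\<forall>\<theta>\<in>{\<theta>0..1}. binom_exp n \<theta> \<phi> \<le> \<alpha>"
      and th: "\<theta> \<in> {0..<\<theta>0}"
    have m: "?r \<phi> \<in> dp_tests n \<epsilon> \<delta>" by (rule dp_refl[OF phi])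
    have l: "\<forall>\<theta>\<in>{0..1-\<theta>0}. binom_exp n \<theta> (?r \<phi>) \<le> \<alpha>"
    proof
      fix t assume "t \<in> {0..1-\<theta>0}"
      then have "1 - t \<in> {\<theta>0..1}" by auto
      then have "binom_exp n (1 - t) \<phi> \<le> \<alpha>" using plev by blast
      then show "binom_exp n t (?r \<phi>) \<le> \<alpha>" using rr[of t \<phi>] by simp
    qed
    have "1 - \<theta> \<in> {1-\<theta>0<..1}" using th by auto
    then have "binom_exp n (1 - \<theta>) (?r \<psi>) \<ge> binom_exp n (1 - \<theta>) (?r \<phi>)"
      using best m l by blast
    then show "binom_exp n \<theta> \<phi> \<le> binom_exp n \<theta> \<psi>" using rr[of "1 - \<theta>" \<psi>] rr[of "1 - \<theta>" \<phi>] by simp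
  qed
qed

lemma F_clip:
  assumes "q < 1"
  shows "tulap_cdf 0 b q x = max 0 (min 1 ((tulap0_cdf 0 b x - q/2) / (1 - q)))"
proof -
  define F0 where "F0 = tulap0_cdf 0 b x"
  have s: "0 < 1 - q" using assms by simp
  consider "F0 < q/2" | "q/2 \<le> F0 \<and> F0 \<le> 1 - q/2" | "F0 > 1 - q/2" by linarith
  then have "tulap_cdf 0 b q x = max 0 (min 1 ((F0 - q/2) / (1 - q)))"
  proof cases
    case 1
    then have "(F0 - q/2) / (1 - q) \<le> 0" using s by (simp add: divide_nonpos_pos)
    then show ?thesis using 1 assms unfolding tulap_cdf_def Let_def F0_def[symmetric] by auto
  next
    case 2
    then have "(F0 - q/2) / (1 - q) \<le> 1" "0 \<le> (F0 - q/2) / (1 - q)" using s by (auto simp: divide_le_eq)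
    then show ?thesis using 2 unfolding tulap_cdf_def Let_def F0_def[symmetric] by auto
  next
    case 3
    then have "(F0 - q/2) / (1 - q) > 1" using s by (auto simp: less_divide_eq)
    then show ?thesis using 3 assms unfolding tulap_cdf_def Let_def F0_def[symmetric] by auto
  qed
  then show ?thesis unfolding F0_def .
qed

lemma T_step:
  fixes b d g :: real
  assumes b: "0 < b" "b < 1" and d: "0 \<le> d"
    and q: "q = 2 * d * b / (1 - b + 2 * d * b)"
  shows "(min (g / b) (1 - b * (1 - g)) - q/2) / (1 - q)
       = min ((g - q/2) / (1 - q) / b + d) (1 - b * (1 - (g - q/2) / (1 - q) - d))"
proof -
  define D where "D = 1 - b + 2 * d * b"
  have D: "0 < D" unfolding D_def using b d by (smt (verit) mult_nonneg_nonneg)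
  have q1: "1 - q = (1 - b) / D" unfolding q D_def[symmetric] using D by (simp add: field_simps D_def)
  have q2: "q / 2 = d * b / D" unfolding q D_def[symmetric] by simp
  have s: "0 < 1 - q" unfolding q1 using D b by simp
  have Tm: "u \<le> v \<Longrightarrow> (u - q/2) / (1 - q) \<le> (v - q/2) / (1 - q)" for u v
    using s by (simp add: divide_right_mono)
  have mono: "(min u v - q/2) / (1 - q) = min ((u - q/2) / (1 - q)) ((v - q/2) / (1 - q))" for u v
  proof (cases "u \<le> v")
    case True then show ?thesis using min_absorb1[OF Tm[OF True]] by (simp add: min_absorb1)
  next
    case False then have "v \<le> u" by simp
    then show ?thesis using min_absorb2[OF Tm[OF \<open>v \<le> u\<close>]] by (simp add: min_absorb2)
  qed
  have b1: "1 - b \<noteq> 0" "b \<noteq> 0" using b by auto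
  have Tg: "(h - q/2) / (1 - q) = (h * D - d * b) / (1 - b)" for h
    unfolding q1 q2 using D b1 by (simp add: field_simps)
  have e1: "(g / b - q/2) / (1 - q) = (g - q/2) / (1 - q) / b + d"
    unfolding Tg using b1 by (simp add: field_simps)
  have e2: "(1 - b * (1 - g) - q/2) / (1 - q) = 1 - b * (1 - (g - q/2) / (1 - q) - d)"
    unfolding Tg using b1 by (simp add: field_simps D_def)
  show ?thesis unfolding mono e1 e2 ..
qed



lemma F_facts:
  fixes \<epsilon> \<delta> b q :: real
  assumes e: "\<epsilon> > 0" and d: "\<delta> \<ge> 0" and bdef: "b = exp (- \<epsilon>)"
    and qdef: "q = 2 * \<delta> * b / (1 - b + 2 * \<delta> * b)"
  shows "s \<le> t \<Longrightarrow> tulap_cdf 0 b q s \<le> tulap_cdf 0 b q t"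
    and "0 \<le> tulap_cdf 0 b q t" and "tulap_cdf 0 b q t \<le> 1"
    and "tulap_cdf 0 b q (t+1) \<le> exp \<epsilon> * tulap_cdf 0 b q t + \<delta>"
    and "1 - tulap_cdf 0 b q t \<le> exp \<epsilon> * (1 - tulap_cdf 0 b q (t+1)) + \<delta>"
    and "tulap_cdf 0 b q t > 0 \<Longrightarrow> min 1 (min (exp \<epsilon> * tulap_cdf 0 b q t + \<delta>)
           (1 - exp (-\<epsilon>) * (1 - tulap_cdf 0 b q t - \<delta>))) \<le> tulap_cdf 0 b q (t+1)"
    and "tulap_cdf 0 b q (t+1) < 1 \<Longrightarrow> min 1 (min (exp \<epsilon> * (1 - tulap_cdf 0 b q (t+1)) + \<delta>)
           (1 - exp (-\<epsilon>) * (1 - (1 - tulap_cdf 0 b q (t+1)) - \<delta>))) \<le> 1 - tulap_cdf 0 b q t"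
proof -
  have b: "0 < b" "b < 1" unfolding bdef using e by auto
  have eb: "exp \<epsilon> = 1 / b" unfolding bdef by (simp add: exp_minus field_simps)
  define D where "D = 1 - b + 2 * \<delta> * b"
  have D: "0 < D" unfolding D_def using b d by (smt (verit) mult_nonneg_nonneg)
  have q1: "1 - q = (1 - b) / D" unfolding qdef D_def[symmetric] using D by (simp add: field_simps D_def)
  have "0 < (1 - b) / D" using D b by simp
  then have q: "q < 1" using q1 by linarith
  define T where "T g = (g - q/2) / (1 - q)" for g
  define cl where "cl y = max 0 (min 1 y)" for y :: real
  have F: "tulap_cdf 0 b q x = cl (T (tulap0_cdf 0 b x))" for x
    unfolding F_clip[OF q] T_def cl_def ..
  have Tm: "u \<le> v \<Longrightarrow> T u \<le> T v" for u v unfolding T_def using q by (simp add: divide_right_mono)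
  have clm: "u \<le> v \<Longrightarrow> cl u \<le> cl v" for u v unfolding cl_def by auto
  have step: "T (tulap0_cdf 0 b (t+1)) = min (T (tulap0_cdf 0 b t) / b + \<delta>) (1 - b * (1 - T (tulap0_cdf 0 b t) - \<delta>))"
    unfolding G_min[OF b] T_def by (rule T_step[OF b d qdef])
  define x where "x = T (tulap0_cdf 0 b t)"
  define y where "y = T (tulap0_cdf 0 b (t+1))"
  have y: "y = min (x / b + \<delta>) (1 - b * (1 - x - \<delta>))" unfolding x_def y_def by (rule step)
  have FX: "tulap_cdf 0 b q t = max 0 (min 1 x)" unfolding F x_def cl_def ..
  have FY: "tulap_cdf 0 b q (t+1) = max 0 (min 1 y)" unfolding F y_def cl_def ..
  show "s \<le> t \<Longrightarrow> tulap_cdf 0 b q s \<le> tulap_cdf 0 b q t"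
    unfolding F by (intro clm Tm G_mono[OF b])
  show "0 \<le> tulap_cdf 0 b q t" "tulap_cdf 0 b q t \<le> 1" unfolding FX by auto
  show "tulap_cdf 0 b q (t+1) \<le> exp \<epsilon> * tulap_cdf 0 b q t + \<delta>"
    unfolding FX FY eb using clip1[OF b d y] by simp
  show "1 - tulap_cdf 0 b q t \<le> exp \<epsilon> * (1 - tulap_cdf 0 b q (t+1)) + \<delta>"
    unfolding FX FY eb using clip2[OF b d y] by simp
  show "tulap_cdf 0 b q t > 0 \<Longrightarrow> min 1 (min (exp \<epsilon> * tulap_cdf 0 b q t + \<delta>)
           (1 - exp (-\<epsilon>) * (1 - tulap_cdf 0 b q t - \<delta>))) \<le> tulap_cdf 0 b q (t+1)"
    unfolding FX FY eb bdef[symmetric] using clip3[OF b d y] by simp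
  show "tulap_cdf 0 b q (t+1) < 1 \<Longrightarrow> min 1 (min (exp \<epsilon> * (1 - tulap_cdf 0 b q (t+1)) + \<delta>)
           (1 - exp (-\<epsilon>) * (1 - (1 - tulap_cdf 0 b q (t+1)) - \<delta>))) \<le> 1 - tulap_cdf 0 b q t"
    unfolding FX FY eb bdef[symmetric] using clip4[OF b d y] by simp
qed



lemma dp_compl: "\<phi> \<in> dp_tests n \<epsilon> \<delta> \<Longrightarrow> (\<lambda>x. 1 - \<phi> x) \<in> dp_tests n \<epsilon> \<delta>"
  unfolding dp_tests_def by auto

lemma F_dp:
  fixes \<epsilon> \<delta> b q :: real
  assumes e: "\<epsilon> > 0" and d: "\<delta> \<ge> 0" and bdef: "b = exp (- \<epsilon>)"
    and qdef: "q = 2 * \<delta> * b / (1 - b + 2 * \<delta> * b)"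
  shows "(\<lambda>x::nat. tulap_cdf 0 b q (real x - m)) \<in> dp_tests n \<epsilon> \<delta>"
proof -
  note FF = F_facts[OF e d bdef qdef]
  have e1: "1 \<le> exp \<epsilon>" using e by simp
  show ?thesis unfolding dp_tests_def
  proof (intro CollectI conjI allI impI)
    fix x assume "x \<le> n"
    show "0 \<le> tulap_cdf 0 b q (real x - m)" "tulap_cdf 0 b q (real x - m) \<le> 1" using FF(2,3) by auto
  next
    fix x assume "x < n"
    define t where "t = real x - m"
    have t1: "real (x + 1) - m = t + 1" unfolding t_def by simp
    define X where "X = tulap_cdf 0 b q t"
    define Y where "Y = tulap_cdf 0 b q (t+1)"
    have XY: "X \<le> Y" "0 \<le> X" "X \<le> 1" "0 \<le> Y" "Y \<le> 1" unfolding X_def Y_def using FF(1-3) by auto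
    have a: "Y \<le> exp \<epsilon> * X + \<delta>" unfolding X_def Y_def by (rule FF(4))
    have c: "1 - X \<le> exp \<epsilon> * (1 - Y) + \<delta>" unfolding X_def Y_def by (rule FF(5))
    have "1 * Y \<le> exp \<epsilon> * Y" using e1 XY by (intro mult_right_mono) auto
    then have b': "X \<le> exp \<epsilon> * Y + \<delta>" using XY d by simp
    have "1 * (1 - X) \<le> exp \<epsilon> * (1 - X)" using e1 XY by (intro mult_right_mono) auto
    then have d': "1 - Y \<le> exp \<epsilon> * (1 - X) + \<delta>" using XY d by simp
    show "tulap_cdf 0 b q (real x - m) \<le> exp \<epsilon> * tulap_cdf 0 b q (real (x + 1) - m) + \<delta>"
      "tulap_cdf 0 b q (real (x + 1) - m) \<le> exp \<epsilon> * tulap_cdf 0 b q (real x - m) + \<delta>"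
      "1 - tulap_cdf 0 b q (real x - m) \<le> exp \<epsilon> * (1 - tulap_cdf 0 b q (real (x + 1) - m)) + \<delta>"
      "1 - tulap_cdf 0 b q (real (x + 1) - m) \<le> exp \<epsilon> * (1 - tulap_cdf 0 b q (real x - m)) + \<delta>"
      unfolding t1 t_def[symmetric] X_def[symmetric] Y_def[symmetric] using a b' c d' by auto
  qed
qed

theorem corollary1:
  fixes \<epsilon> \<delta> \<alpha> \<theta>0 m1 m2 :: real and n :: nat
  assumes "\<epsilon> > 0" and "\<delta> \<ge> 0" and "0 < \<alpha>" and "\<alpha> < 1" and "n \<ge> 1"
    and "0 < \<theta>0" and "\<theta>0 < 1"
    and "b = exp (- \<epsilon>)"
    and "q = 2 * \<delta> * b / (1 - b + 2 * \<delta> * b)"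
    and "\<phi>s = (\<lambda>x::nat. tulap_cdf 0 b q (real x - m1))"
    and "\<psi>s = (\<lambda>x::nat. 1 - tulap_cdf 0 b q (real x - m2))"
    and "binom_exp n \<theta>0 \<phi>s = \<alpha>"
    and "binom_exp n \<theta>0 \<psi>s = \<alpha>"
  shows "UMP n (dp_tests n \<epsilon> \<delta>) {0..\<theta>0} {\<theta>0<..1} \<alpha> \<phi>s
       \<and> UMP n (dp_tests n \<epsilon> \<delta>) {\<theta>0..1} {0..<\<theta>0} \<alpha> \<psi>s"
proof
  note FF = F_facts[OF assms(1,2,8,9)]
  note Fdp = F_dp[OF assms(1,2,8,9)]
  show "UMP n (dp_tests n \<epsilon> \<delta>) {0..\<theta>0} {\<theta>0<..1} \<alpha> \<phi>s"
  proof (rule generic_ump[OF assms(6,7)])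
    show "\<phi>s x \<le> \<phi>s y" if "x \<le> y" "y \<le> n" for x y
      unfolding assms(10) using that by (intro FF(1)) simp
    show "\<phi>s \<in> dp_tests n \<epsilon> \<delta>" unfolding assms(10) by (rule Fdp)
    show "min 1 (min (exp \<epsilon> * \<phi>s x + \<delta>) (1 - exp (- \<epsilon>) * (1 - \<phi>s x - \<delta>))) \<le> \<phi>s (x + 1)"
      if "x < n" "0 < \<phi>s x" for x
    proof -
      have t1: "real (x + 1) - m1 = (real x - m1) + 1" by simp
      show ?thesis using that(2) unfolding assms(10) t1 by (rule FF(6))
    qed
    show "binom_exp n \<theta>0 \<phi>s = \<alpha>" by fact
  qed
  show "UMP n (dp_tests n \<epsilon> \<delta>) {\<theta>0..1} {0..<\<theta>0} \<alpha> \<psi>s"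
  proof (rule UMP_refl, rule generic_ump)
    show "0 < 1 - \<theta>0" "1 - \<theta>0 < 1" using assms(6,7) by auto
    show "\<psi>s (n - x) \<le> \<psi>s (n - y)" if "x \<le> y" "y \<le> n" for x y
      unfolding assms(11) using that by (simp add: FF(1))
    have "\<psi>s \<in> dp_tests n \<epsilon> \<delta>" unfolding assms(11) by (rule dp_compl[OF Fdp])
    then show "(\<lambda>y. \<psi>s (n - y)) \<in> dp_tests n \<epsilon> \<delta>" by (rule dp_refl)
    show "min 1 (min (exp \<epsilon> * \<psi>s (n - x) + \<delta>) (1 - exp (- \<epsilon>) * (1 - \<psi>s (n - x) - \<delta>))) \<le> \<psi>s (n - (x + 1))"
      if "x < n" "0 < \<psi>s (n - x)" for x
    proof -
      define t where "t = real (n - (x + 1)) - m2"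
      have t1: "real (n - x) - m2 = t + 1" unfolding t_def using that(1) by (simp add: of_nat_diff)
      have "tulap_cdf 0 b q (t + 1) < 1" using that(2) unfolding assms(11) t1 by simp
      from FF(7)[OF this] show ?thesis unfolding assms(11) t1 t_def[symmetric] by simp
    qed
    show "binom_exp n (1 - \<theta>0) (\<lambda>y. \<psi>s (n - y)) = \<alpha>"
      using refl_exp[of n "1 - \<theta>0" \<psi>s] assms(13) by simp
  qed
qed


end
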